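(* Let $X$ be a nonnegative random variable with c.d.f. $F$ and $\overline{F}=1-F$, and let $\boldsymbol{\Lambda}$ be a random vector with values in $\mathcal{R}\subseteq\mathbb{R}^n$ and distribution $H_{1,\ldots,n}$, such that conditionally on $\boldsymbol{\Lambda}=\boldsymbol{\lambda}$, $X$ has c.d.f. $C(\cdot;\boldsymbol{\lambda})$ (with $\overline{C}=1-C$). Let $q\in[0,1)$ and, for $\boldsymbol{\lambda}\in\mathcal{R}$, let $q^\ast(\boldsymbol{\lambda})=C(VaR_q[X];\boldsymbol{\lambda})$ and let $CTE_{q^\ast}[X\mid\boldsymbol{\Lambda}=\boldsymbol{\lambda}]$ denote the conditional tail expectation at level $q^\ast(\boldsymbol{\lambda})$ of the distribution $C(\cdot;\boldsymbol{\lambda})$. Then, whenever the quantities involved exist, \[ CTE_q[X]=\frac{\mathbf{E}\left[\overline{C}(VaR_q[X];\boldsymbol{\Lambda})\,CTE_{q^\ast}[X\mid\boldsymbol{\Lambda}]\right]}{\overline{F}(VaR_q[X])}. \]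
   Context: For a random variable $Y$ and $q\in[0,1)$: $VaR_q[Y]=\inf\{x\in\mathbb{R}:\mathbf{P}[Y\le x]\ge q\}$ and $CTE_q[Y]=\mathbf{E}[Y\mid Y>VaR_q[Y]]$; these are applied to a conditional distribution in the obvious way. *)

theory Defs
  imports "HOL-Probability.Probability"
begin

text \<open>Distribution functions of a real distribution N evaluated at an extended real
  point v (needed since VaR at level 0 may be minus infinity).\<close>
definition cdf_at :: "real measure \<Rightarrow> ereal \<Rightarrow> real" where
  "cdf_at N v = measure N {x. ereal x \<le> v}"

definition survival_at :: "real measure \<Rightarrow> ereal \<Rightarrow> real" where
  "survival_at N v = measure N {x. v < ereal x}"

definition VaR :: "real \<Rightarrow> real measure \<Rightarrow> ereal" where
  "VaR q N = Inf {ereal x | x. q \<le> cdf N x}"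

definition CTE :: "real \<Rightarrow> real measure \<Rightarrow> real" where
  "CTE q N = (\<integral>x. indicator {x. VaR q N < ereal x} x * x \<partial>N) / measure N {x. VaR q N < ereal x}"

end

theory Submission
  imports Defs
begin

lemma integral_bind_integrable:
  fixes f :: "'b \<Rightarrow> real"
  assumes N[measurable]: "N \<in> M \<rightarrow>\<^sub>M prob_algebra K" and pM: "prob_space M"
    and f[measurable]: "f \<in> borel_measurable K" and int: "integrable (M \<bind> N) f"
  shows "integral\<^sup>L (M \<bind> N) f = (\<integral>x. integral\<^sup>L (N x) f \<partial>M)"
proof -
  have NS[measurable]: "N \<in> M \<rightarrow>\<^sub>M subprob_algebra K" using N by (rule measurable_prob_algebraD)
  have ne: "space M \<noteq> {}" using pM by (simp add: prob_space.not_empty)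
  have sN: "\<And>x. x \<in> space M \<Longrightarrow> sets (N x) = sets K"
    using measurable_space[OF N] by (simp add: space_prob_algebra)
  have pN: "\<And>x. x \<in> space M \<Longrightarrow> prob_space (N x)"
    using measurable_space[OF N] by (simp add: space_prob_algebra)
  define P where "P x = (\<integral>\<^sup>+y. ennreal (f y) \<partial>N x)" for x
  define Q where "Q x = (\<integral>\<^sup>+y. ennreal (- f y) \<partial>N x)" for x
  have Pm[measurable]: "P \<in> borel_measurable M" unfolding P_def by measurable
  have Qm[measurable]: "Q \<in> borel_measurable M" unfolding Q_def by measurable
  have bP: "(\<integral>\<^sup>+x. ennreal (f x) \<partial>(M \<bind> N)) = (\<integral>\<^sup>+x. P x \<partial>M)"
    unfolding P_def by (rule nn_integral_bind[OF _ NS]) measurable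
  have bQ: "(\<integral>\<^sup>+x. ennreal (- f x) \<partial>(M \<bind> N)) = (\<integral>\<^sup>+x. Q x \<partial>M)"
    unfolding Q_def by (rule nn_integral_bind[OF _ NS]) measurable
  have fP: "(\<integral>\<^sup>+x. P x \<partial>M) \<noteq> \<infinity>" and fQ: "(\<integral>\<^sup>+x. Q x \<partial>M) \<noteq> \<infinity>"
    using integrableD[OF int] bP bQ by auto
  have aeP: "AE x in M. P x \<noteq> \<infinity>" by (rule nn_integral_PInf_AE[OF Pm fP])
  have aeQ: "AE x in M. Q x \<noteq> \<infinity>" by (rule nn_integral_PInf_AE[OF Qm fQ])
  have ae: "AE x in M. integral\<^sup>L (N x) f = enn2real (P x) - enn2real (Q x)"
    using AE_space aeP aeQ
  proof eventually_elim
    case (elim x)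
    have fx: "f \<in> borel_measurable (N x)"
      by (subst measurable_cong_sets[OF sN[OF elim(1)] refl]) (rule f)
    have "integrable (N x) f"
      unfolding real_integrable_def using fx elim unfolding P_def Q_def by auto
    then show ?case unfolding P_def Q_def by (rule real_lebesgue_integral_def)
  qed
  have eP: "(\<integral>\<^sup>+x. ennreal (enn2real (P x)) \<partial>M) = (\<integral>\<^sup>+x. P x \<partial>M)"
    using aeP by (intro nn_integral_cong_AE) (auto simp: less_top)
  have eQ: "(\<integral>\<^sup>+x. ennreal (enn2real (Q x)) \<partial>M) = (\<integral>\<^sup>+x. Q x \<partial>M)"
    using aeQ by (intro nn_integral_cong_AE) (auto simp: less_top)
  have iP: "integrable M (\<lambda>x. enn2real (P x))"
    unfolding real_integrable_def using eP fP by (simp add: ennreal_neg)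
  have iQ: "integrable M (\<lambda>x. enn2real (Q x))"
    unfolding real_integrable_def using eQ fQ by (simp add: ennreal_neg)
  have "(\<integral>x. integral\<^sup>L (N x) f \<partial>M) = (\<integral>x. enn2real (P x) - enn2real (Q x) \<partial>M)"
    using ae by (intro integral_cong_AE) auto
  also have "\<dots> = (\<integral>x. enn2real (P x) \<partial>M) - (\<integral>x. enn2real (Q x) \<partial>M)"
    using iP iQ by (rule Bochner_Integration.integral_diff)
  also have "(\<integral>x. enn2real (P x) \<partial>M) = enn2real (\<integral>\<^sup>+x. P x \<partial>M)"
    using eP by (subst integral_eq_nn_integral) auto
  also have "(\<integral>x. enn2real (Q x) \<partial>M) = enn2real (\<integral>\<^sup>+x. Q x \<partial>M)"
    using eQ by (subst integral_eq_nn_integral) auto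
  finally show ?thesis using real_lebesgue_integral_def[OF int] bP bQ by simp
qed

lemma ereal_le_all_minf: "(\<And>x. (w::ereal) \<le> ereal x) \<Longrightarrow> w = -\<infinity>"
  by (cases w) (auto, metis ereal_less_eq(3) le_less_linear linorder_not_le lt_ex)

lemma cte_local:
  assumes P: "real_distribution P"
  shows "survival_at P v * CTE (cdf_at P v) P = (\<integral>y. indicator {y. v < ereal y} y * y \<partial>P)"
proof -
  interpret real_distribution P by (rule P)
  define A where "A = {y. v < ereal y}"
  define w where "w = VaR (cdf_at P v) P"
  define B where "B = {y. w < ereal y}"
  have Am[measurable]: "A \<in> sets P" unfolding A_def by simp
  have Bm[measurable]: "B \<in> sets P" unfolding B_def by simp
  have CTE_eq: "CTE (cdf_at P v) P = (\<integral>y. indicator B y * y \<partial>P) / measure P B"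
    unfolding CTE_def B_def w_def ..
  have surv: "survival_at P v = measure P A" unfolding survival_at_def A_def ..
  show ?thesis
  proof (cases "measure P A = 0")
    case True
    have "A \<in> null_sets P" using True Am by (simp add: emeasure_eq_measure null_setsI)
    then have "AE y in P. y \<notin> A" by (rule AE_not_in)
    then have "(\<integral>y. indicator A y * y \<partial>P) = (\<integral>y. 0 \<partial>P)"
      by (intro integral_cong_AE) auto
    then show ?thesis using True surv by (simp add: A_def)
  next
    case False
    then have "v \<noteq> \<infinity>" unfolding A_def by auto
    have ae: "AE y in P. y \<in> B \<longleftrightarrow> y \<in> A"
    proof (cases v)
      case MInf
      have "cdf_at P v = 0" unfolding cdf_at_def MInf by simp
      then have "w = Inf {ereal x | x. 0 \<le> cdf P x}" unfolding w_def VaR_def by simp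
      also have "\<dots> = -\<infinity>"
        by (rule ereal_le_all_minf, rule Inf_lower) (auto simp: cdf_def)
      finally show ?thesis unfolding A_def B_def MInf by simp
    next
      case (real r)
      have qs: "cdf_at P v = cdf P r" unfolding cdf_at_def real cdf_def by (simp add: atMost_def)
      define S where "S = {ereal x | x. cdf P r \<le> cdf P x}"
      have wS: "w = Inf S" unfolding w_def VaR_def qs S_def ..
      have wr: "w \<le> ereal r" unfolding wS S_def by (rule Inf_lower) auto
      define I where "I = \<rat> \<inter> {s. cdf P r \<le> cdf P s \<and> s \<le> r}"
      have N: "(\<Union>s\<in>I. {s<..r}) \<in> null_sets P"
      proof (rule null_sets_UN')
        show "countable I" unfolding I_def using countable_rat by auto
      next
        fix s assume "s \<in> I"
        then have s: "cdf P r \<le> cdf P s" "s \<le> r" unfolding I_def by auto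
        have "measure P {s<..r} = 0"
        proof (cases "s = r")
          case False
          then have "measure P {s<..r} = cdf P r - cdf P s" using s by (simp add: cdf_diff_eq)
          also have "\<dots> \<le> 0" using s by simp
          finally show ?thesis by (simp add: measure_nonneg antisym)
        qed simp
        then show "{s<..r} \<in> null_sets P" by (intro null_setsI) (auto simp: emeasure_eq_measure)
      qed
      show ?thesis
      proof (rule AE_I'[OF N], rule subsetI)
        fix y assume "y \<in> {y \<in> space P. \<not> (y \<in> B \<longleftrightarrow> y \<in> A)}"
        then have y: "w < ereal y" "y \<le> r" using wr unfolding A_def B_def real
          by (auto simp: not_le order.strict_trans1[OF wr])
        then obtain x where x: "x \<in> S" "x < ereal y" unfolding wS by (auto simp: Inf_less_iff)
        then obtain x' where x': "x = ereal x'" "cdf P r \<le> cdf P x'" unfolding S_def by auto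
        obtain s where s: "s \<in> \<rat>" "x' < s" "s < y" using Rats_dense_in_real x x' by auto
        have "cdf P x' \<le> cdf P s" using s by (intro cdf_nondecreasing) simp
        then have "s \<in> I" using s x' y unfolding I_def by auto
        then show "y \<in> (\<Union>s\<in>I. {s<..r})" using s y by auto
      qed
    qed (use \<open>v \<noteq> \<infinity>\<close> in simp)
    have mB: "measure P B = measure P A" using measure_eq_AE[OF ae Bm Am] .
    have iB: "(\<integral>y. indicator B y * y \<partial>P) = (\<integral>y. indicator A y * y \<partial>P)"
      using ae by (intro integral_cong_AE) (auto simp: indicator_def)
    show ?thesis using False unfolding surv CTE_eq mB iB by (simp add: A_def)
  qed
qed
theorem corollary4p2:
  fixes M :: "'a measure" and X :: "'a \<Rightarrow> real" and \<Lambda> :: "'a \<Rightarrow> real ^ 'n"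
    and R :: "(real ^ 'n) set" and K :: "real ^ 'n \<Rightarrow> real measure" and q :: real
  assumes "prob_space M"
    and "X \<in> borel_measurable M" and "\<forall>\<omega>\<in>space M. 0 \<le> X \<omega>"
    and "\<Lambda> \<in> borel_measurable M" and "R \<in> sets borel" and "\<forall>\<omega>\<in>space M. \<Lambda> \<omega> \<in> R"
    and "K \<in> restrict_space borel R \<rightarrow>\<^sub>M prob_algebra borel"
    and "\<forall>x::real. \<forall>B\<in>sets borel.
           measure M {\<omega>\<in>space M. X \<omega> \<le> x \<and> \<Lambda> \<omega> \<in> B}
           = (\<integral>\<omega>. indicator B (\<Lambda> \<omega>) * cdf (K (\<Lambda> \<omega>)) x \<partial>M)"
    and "0 \<le> q" and "q < 1"
    and "integrable M X"
    and "0 < survival_at (distr M borel X) (VaR q (distr M borel X))"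
  shows "CTE q (distr M borel X)
    = (\<integral>\<omega>. survival_at (K (\<Lambda> \<omega>)) (VaR q (distr M borel X))
             * CTE (cdf_at (K (\<Lambda> \<omega>)) (VaR q (distr M borel X))) (K (\<Lambda> \<omega>)) \<partial>M)
      / survival_at (distr M borel X) (VaR q (distr M borel X))"
proof -
  interpret prob_space M by (rule assms(1))
  note Xm[measurable] = assms(2)
  define D where "D = distr M borel X"
  define v where "v = VaR q D"
  define \<kappa> where "\<kappa> \<omega> = K (\<Lambda> \<omega>)" for \<omega>
  have Lm: "\<Lambda> \<in> M \<rightarrow>\<^sub>M restrict_space borel R"
    using assms(4,6) by (intro measurable_restrict_space2) auto
  have km[measurable]: "\<kappa> \<in> M \<rightarrow>\<^sub>M prob_algebra borel"
    unfolding \<kappa>_def using measurable_comp[OF Lm assms(7)] by (simp add: comp_def)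
  have kS: "\<kappa> \<in> M \<rightarrow>\<^sub>M subprob_algebra borel" using km by (rule measurable_prob_algebraD)
  have krd: "real_distribution (\<kappa> \<omega>)" if "\<omega> \<in> space M" for \<omega>
    using measurable_space[OF km that]
    by (simp add: space_prob_algebra real_distribution_def real_distribution_axioms_def)
  have Mspace: "M \<in> space (prob_algebra M)" by (simp add: space_prob_algebra prob_space_axioms)
  have rdB: "real_distribution (M \<bind> \<kappa>)"
    unfolding real_distribution_def real_distribution_axioms_def
    using prob_space_bind'[OF Mspace km] sets_bind'[OF Mspace km] by simp
  have rdD: "real_distribution D" unfolding D_def by simp
  have "cdf D = cdf (M \<bind> \<kappa>)"
  proof
    fix x
    have "cdf D x = measure M {\<omega>\<in>space M. X \<omega> \<le> x \<and> \<Lambda> \<omega> \<in> UNIV}"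
      unfolding D_def cdf_def by (subst measure_distr) (auto simp: vimage_def Int_def conj_commute)
    also have "\<dots> = (\<integral>\<omega>. cdf (\<kappa> \<omega>) x \<partial>M)"
      using assms(8)[rule_format, where x=x and B=UNIV] by (simp add: \<kappa>_def)
    also have "\<dots> = cdf (M \<bind> \<kappa>) x"
      unfolding cdf_def by (subst measure_bind[OF kS]) auto
    finally show "cdf D x = cdf (M \<bind> \<kappa>) x" .
  qed
  then have DB: "D = M \<bind> \<kappa>" using cdf_unique[OF rdD rdB] by simp
  define h where "h y = indicator {y. v < ereal y} y * y" for y
  have hm[measurable]: "h \<in> borel_measurable borel" unfolding h_def by measurable
  have "integrable D (\<lambda>y. y)" unfolding D_def
    by (subst integrable_distr_eq) (auto simp: assms(11))
  moreover have "{y. v < ereal y} \<in> sets D" unfolding D_def by simp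
  ultimately have "integrable D (\<lambda>y. y * indicator {y. v < ereal y} y)"
    by (intro integrable_real_mult_indicator)
  moreover have "h = (\<lambda>y. y * indicator {y. v < ereal y} y)"
    unfolding h_def by (rule ext) (rule mult.commute)
  ultimately have hi: "integrable (M \<bind> \<kappa>) h" unfolding DB by simp
  have "(\<integral>y. h y \<partial>D) = (\<integral>\<omega>. (\<integral>y. h y \<partial>\<kappa> \<omega>) \<partial>M)"
    unfolding DB by (rule integral_bind_integrable[OF km assms(1) hm hi])
  also have "\<dots> = (\<integral>\<omega>. survival_at (\<kappa> \<omega>) v * CTE (cdf_at (\<kappa> \<omega>) v) (\<kappa> \<omega>) \<partial>M)"
    by (intro Bochner_Integration.integral_cong refl) (simp add: cte_local[OF krd] h_def)
  finally have num: "(\<integral>y. h y \<partial>D) = \<dots>" .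
  have lhs: "CTE q D = (\<integral>y. h y \<partial>D) / survival_at D v"
    unfolding CTE_def survival_at_def h_def v_def ..
  show ?thesis
    unfolding D_def[symmetric] v_def[symmetric]
    unfolding \<kappa>_def[symmetric] lhs num ..
qed

end
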